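(* For every positive integer $r$, with $c_r=2^{r+1}-2$, $$S_r^*S_r=2^{r-2}\Big[J_{c_r,c_r}+I_{c_r/2}\otimes\begin{pmatrix}1&-1\\-1&1\end{pmatrix}\Big],$$ where $J_{x,y}$ denotes the $x\times y$ matrix all of whose entries equal $1$.
   Context: Define $\{0,1\}$-matrices $S_r$ recursively. Let $S_1=I_2$. For $r\ge1$ let $F_r=I_{2^r-1}\otimes\begin{pmatrix}0&1\\1&0\end{pmatrix}$, and let $1_r$, $0_r$ denote the $2^r\times1$ all-ones and all-zeros column vectors. For $r\ge2$ set $S_r=\big(B_r^{(i)}\ B_r^{(ii)}\ B_r^{(iii)}\big)$ (horizontal concatenation) with $$B_r^{(i)}=\begin{pmatrix}1_{r-1}&0_{r-1}\\0_{r-1}&1_{r-1}\end{pmatrix},\quad B_r^{(ii)}=\begin{pmatrix}S_{r-1}\\S_{r-1}\end{pmatrix},\quad B_r^{(iii)}=\begin{pmatrix}S_{r-1}\\S_{r-1}F_{r-1}\end{pmatrix}.$$ Then $S_r$ is a $2^r\times c_r$ matrix. *)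

theory Defs
  imports "Jordan_Normal_Form.Matrix"
begin

definition hcat :: "'a::zero mat \<Rightarrow> 'a mat \<Rightarrow> 'a mat" where
  "hcat A B = mat (dim_row A) (dim_col A + dim_col B)
     (\<lambda>(i,j). if j < dim_col A then A $$ (i,j) else B $$ (i, j - dim_col A))"

definition kron :: "'a::times mat \<Rightarrow> 'a mat \<Rightarrow> 'a mat" where
  "kron A B = mat (dim_row A * dim_row B) (dim_col A * dim_col B)
     (\<lambda>(i,j). A $$ (i div dim_row B, j div dim_col B) * B $$ (i mod dim_row B, j mod dim_col B))"

definition Jmat :: "nat \<Rightarrow> nat \<Rightarrow> real mat" where
  "Jmat x y = mat x y (\<lambda>_. 1)"

definition swap2 :: "real mat" where
  "swap2 = mat 2 2 (\<lambda>(i,j). if i = j then 0 else 1)"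

definition K2 :: "real mat" where
  "K2 = mat 2 2 (\<lambda>(i,j). if i = j then 1 else -1)"

definition Fm :: "nat \<Rightarrow> real mat" where
  "Fm r = kron (1\<^sub>m (2^r - 1)) swap2"

definition ones_col :: "nat \<Rightarrow> real mat" where
  "ones_col r = Jmat (2^r) 1"

definition zeros_col :: "nat \<Rightarrow> real mat" where
  "zeros_col r = 0\<^sub>m (2^r) 1"

(* S_r, defined for r \<ge> 1 (the value at r = 0 is irrelevant) *)
fun S :: "nat \<Rightarrow> real mat" where
  "S 0 = 1\<^sub>m 2"
| "S (Suc 0) = 1\<^sub>m 2"
| "S (Suc (Suc n)) =
     (let r' = Suc n;
          B1 = hcat (ones_col r') (zeros_col r') @\<^sub>r hcat (zeros_col r') (ones_col r');
          B2 = S r' @\<^sub>r S r';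
          B3 = S r' @\<^sub>r (S r' * Fm r')
      in hcat (hcat B1 B2) B3)"

end

theory Submission
  imports Defs
begin

definition cn :: "nat \<Rightarrow> nat" where "cn r = 2^(r+1) - 2"
definition sw :: "nat \<Rightarrow> nat" where "sw j = (if even j then Suc j else j - 1)"

fun s :: "nat \<Rightarrow> nat \<Rightarrow> nat \<Rightarrow> real" where
  "s 0 k j = (if k = j then 1 else 0)"
| "s (Suc 0) k j = (if k = j then 1 else 0)"
| "s (Suc (Suc m)) k j = (let n = 2^Suc m; cc = cn (Suc m) in
    if j < 2 then (if (k < n) = (j = 0) then 1 else 0)
    else if j < 2 + cc then s (Suc m) (if k < n then k else k - n) (j - 2)
    else if k < n then s (Suc m) k (j - 2 - cc) else s (Suc m) (k - n) (sw (j - 2 - cc)))"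

lemma cn_eq: "cn r = 2 * (2^r - 1)"
  unfolding cn_def by (simp add: right_diff_distrib')

lemma cn_Suc: "cn (Suc r) = 2 + 2 * cn r"
proof -
  have "(2::nat)^r \<ge> 1" by simp
  moreover have "\<And>x::nat. x \<ge> 1 \<Longrightarrow> 4*x - 2 = 2 + 2*(2*x-2)" by arith
  ultimately show ?thesis unfolding cn_def by simp
qed

lemma sw_lt: "j < 2 * q \<Longrightarrow> sw j < 2 * (q::nat)"
  unfolding sw_def by presburger

lemma sw_lt_cn: "j < cn r \<Longrightarrow> sw j < cn r"
  unfolding cn_eq by (rule sw_lt)

lemma sw_sw: "sw (sw j) = j" unfolding sw_def by presburger
lemma sw_div: "sw j div 2 = j div 2" unfolding sw_def by presburger
lemma sw_neq: "sw j \<noteq> j" unfolding sw_def by presburger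

lemma sum_split: "(\<Sum>k<a+(b::nat). f k) = (\<Sum>k<a. f k) + (\<Sum>k<b. f (a+k))"
  by (induction b) (simp_all add: add.assoc)

lemma s_top: "k < 2^Suc m \<Longrightarrow> s (Suc (Suc m)) k j = (if j<2 then (if j=0 then 1 else 0)
   else if j < 2 + cn (Suc m) then s (Suc m) k (j-2) else s (Suc m) k (j-2-cn (Suc m)))"
  by (simp add: Let_def)

lemma s_bot: "k < 2^Suc m \<Longrightarrow> s (Suc (Suc m)) (2^Suc m + k) j = (if j<2 then (if j=1 then 1 else 0)
   else if j < 2 + cn (Suc m) then s (Suc m) k (j-2) else s (Suc m) k (sw (j-2-cn (Suc m))))"
  by (auto simp add: Let_def)

lemma split_step: "(\<Sum>k<(2::nat)^Suc (Suc m). f k) = (\<Sum>k<2^Suc m. f k) + (\<Sum>k<2^Suc m. f (2^Suc m + k))"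
proof -
  have "(2::nat)^Suc (Suc m) = 2^Suc m + 2^Suc m" by simp
  then show ?thesis by (simp only: sum_split)
qed

lemma colsum: "j < cn (Suc m) \<Longrightarrow> (\<Sum>k<2^Suc m. s (Suc m) k j) = 2^m"
proof (induction m arbitrary: j)
  case 0
  then have "j < 2" by (simp add: cn_def)
  then show ?case by (auto simp: numeral_2_eq_2 lessThan_Suc)
next
  case (Suc m)
  let ?n = "2^Suc m :: nat" let ?c = "cn (Suc m)"
  have t: "(\<Sum>k<?n. s (Suc (Suc m)) k j) = (\<Sum>k<?n. (if j<2 then (if j=0 then 1 else 0)
   else if j < 2 + ?c then s (Suc m) k (j-2) else s (Suc m) k (j-2-?c)))"
    by (rule sum.cong) (simp_all add: s_top)
  have b: "(\<Sum>k<?n. s (Suc (Suc m)) (?n + k) j) = (\<Sum>k<?n. (if j<2 then (if j=1 then 1 else 0)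
   else if j < 2 + ?c then s (Suc m) k (j-2) else s (Suc m) k (sw (j-2-?c))))"
    by (rule sum.cong) (simp_all add: s_bot)
  have jl: "j < 2 + 2 * ?c" using Suc.prems cn_Suc by simp
  show ?case
    unfolding split_step t b
  proof -
    consider "j < 2" | "2 \<le> j" "j < 2 + ?c" | "2 + ?c \<le> j" by linarith
    then show "(\<Sum>k<?n. (if j<2 then (if j=0 then 1 else 0)
   else if j < 2 + ?c then s (Suc m) k (j-2) else s (Suc m) k (j-2-?c))) +
    (\<Sum>k<?n. (if j<2 then (if j=1 then 1 else 0)
   else if j < 2 + ?c then s (Suc m) k (j-2) else s (Suc m) k (sw (j-2-?c)))) = 2 ^ Suc m"
    proof cases
      case 1 then show ?thesis by auto
    next
      case 2 then show ?thesis using Suc.IH[of "j-2"] by simp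
    next
      case 3
      then have "j-2-?c < ?c" using jl by simp
      then show ?thesis using 3 Suc.IH[of "j-2-?c"] Suc.IH[of "sw (j-2-?c)"] sw_lt_cn by simp
    qed
  qed
qed


definition T :: "nat \<Rightarrow> nat \<Rightarrow> nat \<Rightarrow> real" where
  "T m i j = (if i = j then 2^m else if i div 2 = j div 2 then 0 else 2^m/2)"

definition tp :: "nat \<Rightarrow> nat \<Rightarrow> nat \<Rightarrow> real" where
  "tp m k j = (if j<2 then (if j=0 then 1 else 0)
   else if j < 2 + cn (Suc m) then s (Suc m) k (j-2) else s (Suc m) k (j-2-cn (Suc m)))"
definition bt :: "nat \<Rightarrow> nat \<Rightarrow> nat \<Rightarrow> real" where
  "bt m k j = (if j<2 then (if j=1 then 1 else 0)
   else if j < 2 + cn (Suc m) then s (Suc m) k (j-2) else s (Suc m) k (sw (j-2-cn (Suc m))))"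

lemma even_cn: "even (cn r)" unfolding cn_eq by simp

lemma T_sw: "T m (sw a) (sw b) = T m a b"
proof -
  have "sw a = sw b \<longleftrightarrow> a = b" by (metis sw_sw)
  then show ?thesis unfolding T_def sw_div by simp
qed

lemma div_sep: "even (c::nat) \<Longrightarrow> i < c \<Longrightarrow> c \<le> j \<Longrightarrow> i div 2 \<noteq> j div 2"
proof (elim evenE)
  fix d assume "c = 2 * d" "i < c" "c \<le> j"
  then have "i div 2 < d" "d \<le> j div 2" using less_mult_imp_div_less[of i d 2] div_le_mono[of "2*d" j 2]
    by (auto simp: mult.commute)
  then show ?thesis by simp
qed
lemma div_shift: "even (c::nat) \<Longrightarrow> c \<le> a \<Longrightarrow> c \<le> b \<Longrightarrow> (a div 2 = b div 2) = ((a-c) div 2 = (b-c) div 2)"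
proof (elim evenE)
  fix d assume "c = 2 * d" "c \<le> a" "c \<le> b"
  then obtain x y where "a = x + 2*d" "b = y + 2*d" by (metis le_add_diff_inverse2)
  then show ?thesis using \<open>c = 2*d\<close> by simp
qed

lemma T_sym: "T m a b = T m b a" unfolding T_def by auto

lemma T_pair: "T m a b + T m a (sw b) = 2^m"
proof -
  have "a = b \<or> a = sw b" if h: "a div 2 = b div 2"
  proof -
    have "a = 2 * (a div 2) + a mod 2" "b = 2 * (b div 2) + b mod 2" by simp_all
    moreover have "a mod 2 = 0 \<or> a mod 2 = 1" "b mod 2 = 0 \<or> b mod 2 = 1" by auto
    ultimately show ?thesis using h unfolding sw_def by (auto simp: even_iff_mod_2_eq_zero)
  qed
  then show ?thesis unfolding T_def sw_div using sw_neq[of b] sw_div[of b] by auto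
qed

lemma gram: "i < cn (Suc m) \<Longrightarrow> j < cn (Suc m) \<Longrightarrow>
   (\<Sum>k<2^Suc m. s (Suc m) k i * s (Suc m) k j) = T m i j"
proof (induction m arbitrary: i j)
  case 0
  then have "i < 2" "j < 2" by (simp_all add: cn_def)
  then show ?case by (auto simp: numeral_2_eq_2 lessThan_Suc T_def)
next
  case (Suc m)
  let ?n = "2^Suc m :: nat" let ?c = "cn (Suc m)"
  have t: "(\<Sum>k<?n. s (Suc (Suc m)) k i * s (Suc (Suc m)) k j) = (\<Sum>k<?n. tp m k i * tp m k j)"
    by (rule sum.cong) (simp_all add: s_top tp_def)
  have b: "(\<Sum>k<?n. s (Suc (Suc m)) (?n + k) i * s (Suc (Suc m)) (?n + k) j) = (\<Sum>k<?n. bt m k i * bt m k j)"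
    by (rule sum.cong) (simp_all add: s_bot bt_def)
  have il: "i < 2 + 2 * ?c" and jl: "j < 2 + 2 * ?c" using Suc.prems cn_Suc by simp_all
  have ec: "even ?c" by (rule even_cn)
  have IH: "\<And>a b. a < ?c \<Longrightarrow> b < ?c \<Longrightarrow> (\<Sum>k<?n. s (Suc m) k a * s (Suc m) k b) = T m a b"
    using Suc.IH by blast
  have CS: "\<And>a. a < ?c \<Longrightarrow> (\<Sum>k<?n. s (Suc m) k a) = 2^m" by (rule colsum)
  have swl: "\<And>a. a < ?c \<Longrightarrow> sw a < ?c" by (rule sw_lt_cn)
  show ?case
    unfolding split_step t b
  proof -
    consider "i < 2" | "2 \<le> i" "i < 2 + ?c" | "2 + ?c \<le> i" by linarith
    note ci = this
    consider "j < 2" | "2 \<le> j" "j < 2 + ?c" | "2 + ?c \<le> j" by linarith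
    note cj = this
    show "(\<Sum>k<?n. tp m k i * tp m k j) + (\<Sum>k<?n. bt m k i * bt m k j) = T (Suc m) i j"
    proof (cases rule: ci)
      case 1
      then show ?thesis
      proof (cases rule: cj)
        case 1 then show ?thesis using \<open>i<2\<close> by (auto simp: tp_def bt_def T_def)
      next
        case 2 then show ?thesis using \<open>i<2\<close> 2 CS[of "j-2"] jl by (cases "i = 0") (auto simp: tp_def bt_def T_def)
      next
        case 3
        show ?thesis proof -
          have "j-2-?c < ?c" using jl 3 by simp
          then show ?thesis using \<open>i<2\<close> 3 CS[of "j-2-?c"] CS[of "sw (j-2-?c)"] swl[of "j-2-?c"]
            by (cases "i = 0") (auto simp: tp_def bt_def T_def)
        qed
      qed
    next
      case 2
      then show ?thesis
      proof (cases rule: cj)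
        case 1 then show ?thesis using \<open>j<2\<close> 2 CS[of "i-2"] il by (cases "j = 0") (auto simp: tp_def bt_def T_def)
      next
        case 2
        show ?thesis proof -
          have "(i div 2 = j div 2) = ((i-2) div 2 = (j-2) div 2)" using 2 \<open>2 \<le> i\<close> by (intro div_shift) auto
          moreover have "(i = j) = (i-2 = j-2)" using 2 \<open>2 \<le> i\<close> by auto
          ultimately show ?thesis using 2 \<open>2 \<le> i\<close> \<open>i < 2 + ?c\<close> IH[of "i-2" "j-2"]
            by (simp add: tp_def bt_def) (simp add: T_def)
        qed
      next
        case 3
        show ?thesis proof -
          have jj: "j-2-?c < ?c" using jl 3 by simp
          have "i div 2 \<noteq> j div 2" using 3 \<open>i < 2 + ?c\<close> ec by (intro div_sep[of "2 + ?c"]) auto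
          moreover have "i \<noteq> j" using 3 \<open>i < 2 + ?c\<close> by auto
          ultimately show ?thesis using 3 \<open>2 \<le> i\<close> \<open>i < 2 + ?c\<close> IH[of "i-2" "j-2-?c"] IH[of "i-2" "sw (j-2-?c)"]
             jj swl[OF jj] T_pair[of m "i-2" "j-2-?c"]
            by (simp add: tp_def bt_def) (simp add: T_def)
        qed
      qed
    next
      case 3
      then show ?thesis
      proof (cases rule: cj)
        case 1
        show ?thesis proof -
          have "i-2-?c < ?c" using il 3 by simp
          then show ?thesis using \<open>j<2\<close> 3 CS[of "i-2-?c"] CS[of "sw (i-2-?c)"] swl[of "i-2-?c"]
            by (cases "j = 0") (auto simp: tp_def bt_def T_def)
        qed
      next
        case 2
        show ?thesis proof -
          have ii: "i-2-?c < ?c" using il 3 by simp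
          have "i div 2 \<noteq> j div 2" using 3 2 ec div_sep[of "2 + ?c" j i] by auto
          moreover have "i \<noteq> j" using 3 2 by auto
          ultimately show ?thesis using 3 2 IH[of "i-2-?c" "j-2"] IH[of "sw (i-2-?c)" "j-2"]
             ii swl[OF ii] T_pair[of m "j-2" "i-2-?c"] T_sym[of m "j-2"]
            by (simp add: tp_def bt_def) (simp add: T_def)
        qed
      next
        case 3
        show ?thesis proof -
          have ii: "i-2-?c < ?c" using il \<open>2 + ?c \<le> i\<close> by simp
          have jj: "j-2-?c < ?c" using jl 3 by simp
          have "(i div 2 = j div 2) = ((i-(2+?c)) div 2 = (j-(2+?c)) div 2)" using 3 \<open>2 + ?c \<le> i\<close> ec by (intro div_shift) auto
          moreover have "(i = j) = (i-2-?c = j-2-?c)" using 3 \<open>2 + ?c \<le> i\<close> by auto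
          ultimately show ?thesis using 3 \<open>2 + ?c \<le> i\<close> IH[of "i-2-?c" "j-2-?c"] IH[of "sw (i-2-?c)" "sw (j-2-?c)"]
             ii jj swl[OF ii] swl[OF jj] T_sw[of m "i-2-?c" "j-2-?c"]
            by (simp add: tp_def bt_def) (simp add: T_def)
        qed
      qed
    qed
  qed
qed



lemma hcat_index[simp]:
  "dim_row (hcat A B) = dim_row A" "dim_col (hcat A B) = dim_col A + dim_col B"
  "i < dim_row A \<Longrightarrow> j < dim_col A + dim_col B \<Longrightarrow>
     hcat A B $$ (i,j) = (if j < dim_col A then A $$ (i,j) else B $$ (i, j - dim_col A))"
  unfolding hcat_def by auto

lemma append_rows_index[simp]:
  "dim_row (A @\<^sub>r B) = dim_row A + dim_row B" "dim_col (A @\<^sub>r B) = dim_col A"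
  "i < dim_row A + dim_row B \<Longrightarrow> j < dim_col A \<Longrightarrow>
     (A @\<^sub>r B) $$ (i,j) = (if i < dim_row A then A $$ (i,j) else B $$ (i - dim_row A, j))"
  unfolding append_rows_def by auto

lemma Fm_dim[simp]: "dim_row (Fm r) = cn r" "dim_col (Fm r) = cn r"
  unfolding Fm_def kron_def swap2_def cn_eq by auto

lemma Fm_index: "l < cn r \<Longrightarrow> j < cn r \<Longrightarrow> Fm r $$ (l,j) = (if l = sw j then 1 else 0)"
proof -
  assume l: "l < cn r" and j: "j < cn r"
  have "l div 2 < 2^r - 1" "j div 2 < 2^r - 1" using l j unfolding cn_eq by auto
  moreover have "(l div 2 = j div 2 \<and> l mod 2 \<noteq> j mod 2) = (l = sw j)"
  proof -
    have sa: "sw j = 2*(j div 2) + (1 - j mod 2)"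
    proof (cases "even j")
      case True
      then have "j mod 2 = 0" by simp
      then show ?thesis using True unfolding sw_def by (metis Suc_eq_plus1 add.right_neutral diff_zero div_mult_mod_eq mult.commute)
    next
      case False
      then have "j mod 2 = 1" by (simp add: odd_iff_mod_2_eq_one)
      then show ?thesis using False unfolding sw_def by (metis add_diff_cancel_right' add.right_neutral diff_self_eq_0 div_mult_mod_eq mult.commute)
    qed
    have key: "\<And>x y a b::nat. a \<le> 1 \<Longrightarrow> b \<le> 1 \<Longrightarrow> (2*x+a = 2*y+(1-b)) = (x=y \<and> a\<noteq>b)" by arith
    have "(l = sw j) = (2*(l div 2)+ l mod 2 = sw j)" by simp
    also have "\<dots> = (l div 2 = j div 2 \<and> l mod 2 \<noteq> j mod 2)" unfolding sa by (rule key) auto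
    finally show ?thesis by simp
  qed
  ultimately show ?thesis using l j unfolding Fm_def kron_def swap2_def cn_eq
    by (auto simp: mod_less_divisor)
qed

lemma mult_Fm: "mat n (cn r) f * Fm r = mat n (cn r) (\<lambda>(k,j). f (k, sw j))"
proof (rule eq_matI)
  fix i j assume i: "i < dim_row (mat n (cn r) (\<lambda>(k,j). f (k, sw j)))"
    and j: "j < dim_col (mat n (cn r) (\<lambda>(k,j). f (k, sw j)))"
  then have i: "i < n" and j: "j < cn r" by auto
  have "(mat n (cn r) f * Fm r) $$ (i,j) = (\<Sum>l\<in>{0..<cn r}. f (i,l) * Fm r $$ (l,j))"
    using i j by (simp add: scalar_prod_def)
  also have "\<dots> = (\<Sum>l\<in>{0..<cn r}. if l = sw j then f (i, l) else 0)"
    by (rule sum.cong) (auto simp: Fm_index j)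
  also have "\<dots> = f (i, sw j)" using sw_lt_cn[OF j] by simp
  finally show "(mat n (cn r) f * Fm r) $$ (i,j) = mat n (cn r) (\<lambda>(k,j). f (k, sw j)) $$ (i,j)"
    using i j by simp
qed auto

lemma S_eq: "S (Suc m) = mat (2^Suc m) (cn (Suc m)) (\<lambda>(k,j). s (Suc m) k j)"
proof (induction m)
  case 0
  show ?case by (rule eq_matI) (auto simp: cn_def)
next
  case (Suc m)
  let ?n = "2^Suc m :: nat" let ?c = "cn (Suc m)"
  let ?M = "mat ?n ?c (\<lambda>(k,j). s (Suc m) k j)"
  have F: "?M * Fm (Suc m) = mat ?n ?c (\<lambda>(k,j). s (Suc m) k (sw j))"
    by (simp add: mult_Fm)
  have cs: "cn (Suc (Suc m)) = 2 + 2 * ?c" by (rule cn_Suc)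
  have nn: "(2::nat)^Suc (Suc m) = ?n + ?n" by simp
  show ?case
    unfolding S.simps(3) Let_def Suc.IH F
  proof (rule eq_matI)
    fix i j assume i: "i < dim_row (mat (2 ^ Suc (Suc m)) (cn (Suc (Suc m))) (\<lambda>(k, j). s (Suc (Suc m)) k j))"
      and j: "j < dim_col (mat (2 ^ Suc (Suc m)) (cn (Suc (Suc m))) (\<lambda>(k, j). s (Suc (Suc m)) k j))"
    then have i: "i < ?n + ?n" and j: "j < 2 + 2 * ?c" using cs nn by auto
    let ?L = "hcat (hcat (hcat (ones_col (Suc m)) (zeros_col (Suc m)) @\<^sub>r hcat (zeros_col (Suc m)) (ones_col (Suc m)))
            (?M @\<^sub>r ?M)) (?M @\<^sub>r mat ?n ?c (\<lambda>(k,j). s (Suc m) k (sw j)))"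
    have R: "mat (2 ^ Suc (Suc m)) (cn (Suc (Suc m))) (\<lambda>(k, j). s (Suc (Suc m)) k j) $$ (i, j) = s (Suc (Suc m)) i j"
      using i j cs nn by simp
    have dB1: "dim_row (hcat (ones_col (Suc m)) (zeros_col (Suc m)) @\<^sub>r hcat (zeros_col (Suc m)) (ones_col (Suc m))) = ?n + ?n"
       "dim_col (hcat (ones_col (Suc m)) (zeros_col (Suc m)) @\<^sub>r hcat (zeros_col (Suc m)) (ones_col (Suc m))) = 2"
      by (simp_all add: ones_col_def zeros_col_def Jmat_def)
    have L: "?L $$ (i,j) = (if j < 2 then (hcat (ones_col (Suc m)) (zeros_col (Suc m)) @\<^sub>r hcat (zeros_col (Suc m)) (ones_col (Suc m))) $$ (i,j)
       else if j < 2 + ?c then (?M @\<^sub>r ?M) $$ (i, j - 2) else (?M @\<^sub>r mat ?n ?c (\<lambda>(k,j). s (Suc m) k (sw j))) $$ (i, j - 2 - ?c))"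
      using i j dB1 by (simp add: hcat_index)
    consider "j < 2" | j' where "j = 2 + j'" "j' < ?c" | j' where "j = 2 + ?c + j'" "j' < ?c"
    proof -
      have "j < 2 \<or> (2 \<le> j \<and> j < 2 + ?c) \<or> 2 + ?c \<le> j" by linarith
      then show thesis
      proof (elim disjE conjE)
        assume "j < 2" then show thesis using that(1) by blast
      next
        assume "2 \<le> j" "j < 2 + ?c"
        then have "j = 2 + (j - 2)" "j - 2 < ?c" by linarith+
        then show thesis using that(2) by blast
      next
        assume "2 + ?c \<le> j"
        then have "j = 2 + ?c + (j - 2 - ?c)" "j - 2 - ?c < ?c" using j by linarith+
        then show thesis using that(3) by blast
      qed
    qed
    then show "?L $$ (i,j) = mat (2 ^ Suc (Suc m)) (cn (Suc (Suc m))) (\<lambda>(k, j). s (Suc (Suc m)) k j) $$ (i, j)"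
    proof cases
      case 1
      then show ?thesis unfolding R L using i
        by (cases "i < ?n") (auto simp: ones_col_def zeros_col_def Jmat_def Let_def)
    next
      case 2
      then show ?thesis unfolding R L using i
        by (cases "i < ?n") (simp_all add: Let_def)
    next
      case 3
      then show ?thesis unfolding R L using i
        by (cases "i < ?n") (simp_all add: Let_def)
    qed
  qed (auto simp: ones_col_def zeros_col_def Jmat_def cs nn)
qed


lemma powi_eq: "(2::real) powi (int (Suc m) - 2) = 2^m/2"
proof (cases m)
  case 0 then show ?thesis by (simp add: power_int_def)
next
  case (Suc k)
  then have "int (Suc m) - 2 = int k" by simp
  then show ?thesis using Suc by (simp add: power_int_def)
qed

lemma div_mod_same: "(i::nat) div 2 = j div 2 \<Longrightarrow> i mod 2 = j mod 2 \<Longrightarrow> i = j"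
  by (metis div_mult_mod_eq)

theorem lemma4p3:
  fixes r c :: nat
  assumes "r \<ge> 1" and "c = 2^(r+1) - 2"
  shows "transpose_mat (S r) * S r
           = ((2::real) powi (int r - 2)) \<cdot>\<^sub>m (Jmat c c + kron (1\<^sub>m (c div 2)) K2)"
proof -
  obtain m where r: "r = Suc m" using assms(1) by (cases r) auto
  have c: "c = cn (Suc m)" using assms(2) r by (simp add: cn_def)
  have c2: "c div 2 * 2 = c" using even_cn[of "Suc m"] c by simp
  have c3: "cn (Suc m) = cn (Suc m) div 2 * 2" using c2 c by simp
  let ?M = "mat (2^Suc m) (cn (Suc m)) (\<lambda>(k,j). s (Suc m) k j)"
  show ?thesis unfolding r S_eq powi_eq
  proof (rule eq_matI)
    fix i j assume "i < dim_row ((2 ^ m / 2) \<cdot>\<^sub>m (Jmat c c + kron (1\<^sub>m (c div 2)) K2))"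
      and "j < dim_col ((2 ^ m / 2) \<cdot>\<^sub>m (Jmat c c + kron (1\<^sub>m (c div 2)) K2))"
    then have i: "i < c" and j: "j < c" using c2 by (simp_all add: kron_def K2_def)
    have "(transpose_mat ?M * ?M) $$ (i,j) = (\<Sum>k\<in>{0..<2^Suc m}. s (Suc m) k i * s (Suc m) k j)"
      using i j c by (simp add: scalar_prod_def)
    also have "\<dots> = T m i j" using gram[of i m j] i j c by (simp add: atLeast0LessThan)
    finally have L: "(transpose_mat ?M * ?M) $$ (i,j) = T m i j" .
    have id: "i div 2 < c div 2" "j div 2 < c div 2" using i j c2 by linarith+
    have R: "((2 ^ m / 2) \<cdot>\<^sub>m (Jmat c c + kron (1\<^sub>m (c div 2)) K2)) $$ (i,j)
       = 2^m/2 * (1 + (if i div 2 = j div 2 then 1 else 0) * (if i mod 2 = j mod 2 then 1 else -1))"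
      using i j c2 id by (simp add: kron_def K2_def Jmat_def)
    show "(transpose_mat ?M * ?M) $$ (i,j) = ((2 ^ m / 2) \<cdot>\<^sub>m (Jmat c c + kron (1\<^sub>m (c div 2)) K2)) $$ (i,j)"
      unfolding L R T_def using div_mod_same[of i j] by auto
  qed (use c3 in \<open>simp_all add: kron_def K2_def c\<close>)
qed

end
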